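(* Let $a\geq 1$ and $b\geq 2$ be integers. For Lebesgue-almost every $x\in cA$ there exists $k\geq 0$ such that $T_{a,b}^k(x)\in\Theta$.
   Context: For $n\geq 1$ let $\Lambda^n=\{x\in\mathbb{R}^n : 0\leq x_1\leq\cdots\leq x_n\}$. For integers $a,b\geq 1$ the map $T_{a,b}:\Lambda^{a+b}\to\Lambda^{a+b}$ sends $x$ to the vector obtained by arranging $x_1,\ldots,x_a,\,x_{a+1}-x_a,\ldots,x_{a+b}-x_a$ in nondecreasing order. Let $\sigma(x)=x_1+\cdots+x_{a+b}$, $cA=\{x\in\Lambda^{a+b}: \sigma(x)>b\,x_{a+b}\}$ and $\Theta=\{x\in cA : 2x_a\geq x_{a+b}\}$. *)

theory Defs
  imports "HOL-Analysis.Analysis"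
begin

text \<open>Vectors of R^n are represented as functions nat => real, extensional on
  {..<n}; coordinate x_i of the paper (1-indexed) is x (i-1) here.\<close>

definition Lam :: "nat \<Rightarrow> (nat \<Rightarrow> real) set" where
  "Lam n = {x \<in> extensional {..<n}. (0 < n \<longrightarrow> 0 \<le> x 0) \<and>
                  (\<forall>i. Suc i < n \<longrightarrow> x i \<le> x (Suc i))}"

definition Tab :: "nat \<Rightarrow> nat \<Rightarrow> (nat \<Rightarrow> real) \<Rightarrow> (nat \<Rightarrow> real)" where
  "Tab a b x = (let L = sort (map x [0..<a] @ map (\<lambda>i. x i - x (a - 1)) [a..<a+b])
                in restrict (\<lambda>i. L ! i) {..<a+b})"

definition sig :: "nat \<Rightarrow> (nat \<Rightarrow> real) \<Rightarrow> real" where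
  "sig n x = (\<Sum>i<n. x i)"

definition cA :: "nat \<Rightarrow> nat \<Rightarrow> (nat \<Rightarrow> real) set" where
  "cA a b = {x \<in> Lam (a+b). sig (a+b) x > real b * x (a+b-1)}"

definition Theta :: "nat \<Rightarrow> nat \<Rightarrow> (nat \<Rightarrow> real) set" where
  "Theta a b = {x \<in> cA a b. 2 * x (a-1) \<ge> x (a+b-1)}"

end

theory Submission
  imports Defs
begin

lemma sum_list_sort_eq: "sum_list (sort (xs::real list)) = sum_list xs"
  by (metis mset_sort sum_mset_sum_list)

lemma Lam_mono:
  assumes "x \<in> Lam n" "i \<le> j" "j < n"
  shows "x i \<le> x j"
  using assms(2,3)
proof (induction j)
  case 0 then show ?case by simp
next
  case (Suc j)
  show ?case
  proof (cases "i = Suc j")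
    case True then show ?thesis by simp
  next
    case False
    then have "x i \<le> x j" using Suc by simp
    moreover have "x j \<le> x (Suc j)" using assms(1) Suc.prems by (simp add: Lam_def)
    ultimately show ?thesis by simp
  qed
qed

lemma Lam_nonneg:
  assumes "x \<in> Lam n" "i < n"
  shows "0 \<le> x i"
proof -
  have "0 \<le> x 0" using assms by (simp add: Lam_def)
  also have "x 0 \<le> x i" using Lam_mono[OF assms(1), of 0 i] assms by simp
  finally show ?thesis .
qed

context
  fixes a b :: nat and x :: "nat \<Rightarrow> real"
  assumes a1: "a \<ge> 1" and b1: "b \<ge> 1" and xL: "x \<in> Lam (a+b)"
begin

definition LL where "LL = sort (map x [0..<a] @ map (\<lambda>i. x i - x (a - 1)) [a..<a+b])"

lemma LL_len: "length LL = a + b"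
  by (simp add: LL_def)

lemma Tab_eq: "i < a + b \<Longrightarrow> Tab a b x i = LL ! i"
  by (simp add: Tab_def LL_def Let_def)

lemma LL_sorted: "sorted LL" by (simp add: LL_def)

lemma LL_set: "set LL = x ` {0..<a} \<union> (\<lambda>i. x i - x (a - 1)) ` {a..<a+b}"
  by (simp add: LL_def)

lemma Tab_Lam: "Tab a b x \<in> Lam (a+b)"
proof -
  have ext: "Tab a b x \<in> extensional {..<a+b}"
    by (simp add: Tab_def Let_def)
  have mono: "Tab a b x i \<le> Tab a b x (Suc i)" if "Suc i < a + b" for i
    using that Tab_eq LL_sorted LL_len sorted_nth_mono[of LL i "Suc i"] by simp
  have "LL ! 0 \<in> set LL" using LL_len a1 by (simp add: nth_mem)
  then have "0 \<le> LL ! 0"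
    unfolding LL_set using Lam_nonneg[OF xL] Lam_mono[OF xL] a1 by force
  then have "0 \<le> Tab a b x 0" using Tab_eq a1 by simp
  with ext mono show ?thesis by (simp add: Lam_def)
qed

lemma Tab_sig: "sig (a+b) (Tab a b x) = sig (a+b) x - real b * x (a - 1)"
proof -
  have "sig (a+b) (Tab a b x) = (\<Sum>i<a+b. LL ! i)"
    unfolding sig_def by (rule sum.cong) (auto simp: Tab_eq)
  also have "\<dots> = sum_list LL"
    using LL_len by (simp add: sum_list_sum_nth atLeast0LessThan)
  also have "\<dots> = sum_list (map x [0..<a]) + sum_list (map (\<lambda>i. x i - x (a - 1)) [a..<a+b])"
    unfolding LL_def sum_list_sort_eq by simp
  also have "\<dots> = (\<Sum>i<a. x i) + (\<Sum>i\<in>{a..<a+b}. x i - x (a - 1))"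
    by (simp add: sum_list_distinct_conv_sum_set atLeast0LessThan)
  also have "\<dots> = (\<Sum>i<a. x i) + (\<Sum>i\<in>{a..<a+b}. x i) - real b * x (a - 1)"
    by (simp add: sum_subtractf)
  also have "(\<Sum>i<a. x i) + (\<Sum>i\<in>{a..<a+b}. x i) = (\<Sum>i<a+b. x i)"
    by (metis atLeast0LessThan sum.atLeastLessThan_concat le_add1 zero_le)
  finally show ?thesis by (simp add: sig_def)
qed

lemma Tab_max:
  assumes "x (a - 1) \<le> x (a+b-1) - x (a - 1)" "i < a + b"
  shows "Tab a b x i \<le> x (a+b-1) - x (a - 1)"
proof -
  have "LL ! i \<in> set LL" using LL_len assms by (simp add: nth_mem)
  then obtain j where "(j < a \<and> LL ! i = x j) \<or> (a \<le> j \<and> j < a + b \<and> LL ! i = x j - x (a - 1))"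
    unfolding LL_set by fastforce
  then have "LL ! i \<le> x (a+b-1) - x (a - 1)"
  proof
    assume "j < a \<and> LL ! i = x j"
    then have j: "j \<le> a - 1" "LL ! i = x j" using a1 by auto
    have "x j \<le> x (a - 1)" using Lam_mono[OF xL j(1)] a1 by simp
    then show ?thesis using j assms(1) by linarith
  next
    assume "a \<le> j \<and> j < a + b \<and> LL ! i = x j - x (a - 1)"
    then have j: "j \<le> a + b - 1" "LL ! i = x j - x (a - 1)" by auto
    have "x j \<le> x (a + b - 1)" using Lam_mono[OF xL j(1)] a1 by simp
    then show ?thesis using j by linarith
  qed
  then show ?thesis using Tab_eq assms by simp
qed

lemma f_bound: "sig (a+b) x - real b * x (a+b-1) \<le> real a * x (a - 1)"
proof -
  have "sig (a+b) x = (\<Sum>i<a. x i) + (\<Sum>i\<in>{a..<a+b}. x i)"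
    unfolding sig_def
    by (metis atLeast0LessThan sum.atLeastLessThan_concat le_add1 zero_le)
  moreover have "(\<Sum>i<a. x i) \<le> (\<Sum>i<a. x (a - 1))"
    by (rule sum_mono) (use Lam_mono[OF xL] a1 in auto)
  moreover have "(\<Sum>i\<in>{a..<a+b}. x i) \<le> (\<Sum>i\<in>{a..<a+b}. x (a+b-1))"
    by (rule sum_mono) (use Lam_mono[OF xL] in auto)
  ultimately show ?thesis by simp
qed

end

lemma sig_nonneg: "x \<in> Lam n \<Longrightarrow> 0 \<le> sig n x"
  unfolding sig_def by (rule sum_nonneg) (auto intro: Lam_nonneg)

theorem lemma5p2:
  fixes a b :: nat
  assumes "a \<ge> 1" and "b \<ge> 2"
  shows "AE x in PiM {..<a+b} (\<lambda>_. lborel).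
           x \<in> cA a b \<longrightarrow> (\<exists>k. (Tab a b ^^ k) x \<in> Theta a b)"
proof (rule AE_I2, rule impI, rule ccontr)
  fix x assume xA: "x \<in> cA a b" and nT: "\<not> (\<exists>k. (Tab a b ^^ k) x \<in> Theta a b)"
  have b1: "b \<ge> 1" using assms by simp
  define f where "f y = sig (a+b) y - real b * y (a+b-1)" for y
  define c where "c = f x"
  have c0: "c > 0" using xA by (simp add: cA_def c_def f_def)
  have main: "(Tab a b ^^ k) x \<in> cA a b \<and> f ((Tab a b ^^ k) x) \<ge> c \<and>
      sig (a+b) ((Tab a b ^^ k) x) \<le> sig (a+b) x - real k * (real b * c / real a)" for k
  proof (induction k)
    case 0 then show ?case using xA by (simp add: c_def)
  next
    case (Suc k)
    define y where "y = (Tab a b ^^ k) x"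
    have yA: "y \<in> cA a b" and fy: "f y \<ge> c"
      and sy: "sig (a+b) y \<le> sig (a+b) x - real k * (real b * c / real a)"
      using Suc by (simp_all add: y_def)
    have yL: "y \<in> Lam (a+b)" using yA by (simp add: cA_def)
    have nTy: "y \<notin> Theta a b" using nT y_def by blast
    then have big: "2 * y (a - 1) < y (a+b-1)" using yA by (simp add: Theta_def)
    have Ty: "(Tab a b ^^ Suc k) x = Tab a b y" by (simp add: y_def)
    have TL: "Tab a b y \<in> Lam (a+b)" by (rule Tab_Lam[OF assms(1) b1 yL])
    have Tsig: "sig (a+b) (Tab a b y) = sig (a+b) y - real b * y (a - 1)"
      by (rule Tab_sig[OF assms(1) b1 yL])
    have Tmax: "Tab a b y (a+b-1) \<le> y (a+b-1) - y (a - 1)"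
      using Tab_max[OF assms(1) b1 yL, of "a+b-1"] big assms by simp
    have fT: "f (Tab a b y) \<ge> f y"
    proof -
      have "real b * Tab a b y (a+b-1) \<le> real b * (y (a+b-1) - y (a - 1))"
        using Tmax by (intro mult_left_mono) auto
      then show ?thesis unfolding f_def using Tsig by (simp add: algebra_simps)
    qed
    have fb: "f y \<le> real a * y (a - 1)"
      using f_bound[OF assms(1) b1 yL] by (simp add: f_def)
    have ya: "y (a - 1) \<ge> c / real a"
      using fb fy assms(1) by (simp add: field_simps)
    have "real b * y (a - 1) \<ge> real b * c / real a"
      using mult_left_mono[OF ya, of "real b"] by simp
    then have s2: "sig (a+b) (Tab a b y) \<le> sig (a+b) x - real (Suc k) * (real b * c / real a)"
    proof -
      have "real (Suc k) * (real b * c / real a) = real k * (real b * c / real a) + real b * c / real a"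
        by (simp add: algebra_simps add_divide_distrib)
      then show ?thesis using Tsig sy \<open>real b * y (a - 1) \<ge> real b * c / real a\<close> by linarith
    qed
    have "Tab a b y \<in> cA a b"
      using TL fT fy c0 by (simp add: cA_def f_def)
    then show ?case using Ty fT fy s2 by simp
  qed
  have pos: "real b * c / real a > 0" using c0 assms by simp
  obtain k :: nat where k: "sig (a+b) x / (real b * c / real a) < real k"
    using reals_Archimedean2 by blast
  then have "sig (a+b) x < real k * (real b * c / real a)"
    using pos pos_divide_less_eq by blast
  moreover have "0 \<le> sig (a+b) ((Tab a b ^^ k) x)"
    using main[of k] by (intro sig_nonneg) (simp add: cA_def)
  ultimately show False using main[of k] by simp
qed

end
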